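(* Let $R$ be a process and $X=(X_1,\dots,X_m)$ a risk basis with $R(t)=\varrho((X_1,\dots,X_m)^t)$ for a mapping $\varrho$. Suppose $X$ generates the ISU decomposition $D(t)=(D_1(t),\dots,D_m(t))$ of $R(t)-R(0)$ with respect to a sequence of partitions $(\mathcal T_n(t))_n$ of $[0,t]$ with vanishing mesh. Let $\mathcal G$ be a sub-$\sigma$-algebra of $\mathcal A$. Suppose the SU decompositions $D^n(t)=(D^n_1(t),\dots,D^n_m(t))$ of $R(t)-R(0)$ with respect to $\mathcal T_n(t)$ satisfy $|D^n_i(t)|\le Y$ for all $i=1,\dots,m$ and $n\in\mathbb N$, for some integrable random variable $Y$. Then the ISU decomposition (with respect to the same sequence of partitions) of $$\widetilde R(t)=\widetilde\varrho((X_1,\dots,X_m)^t):=\mathbb E\big[\varrho((X_1,\dots,X_m)^t)\,\big|\,\mathcal G\big],$$ where $\widetilde\varrho(\cdot):=\mathbb E[\varrho(\cdot)\mid\mathcal G]$, is $$\widetilde D(t)=\big(\mathbb E[D_1(t)\mid\mathcal G],\dots,\mathbb E[D_m(t)\mid\mathcal G]\big).$$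
   Context: **Setting.** $(\Omega,\mathcal A,\mathbb P)$ is a probability space. For a process $Y$, $Y^t(s)=Y(\min(s,t))$, componentwise for tuples. **Surface.** $U(t_1,\dots,t_m)=\varrho((X_1^{t_1},\dots,X_m^{t_m}))$. **SU decomposition.** For a partition $0=t_0<\dots<t_k=t$, the SU decomposition of $R(t)-R(0)$ is $$D_i(t)=\sum_{l=0}^{k-1}\Big(U(\underbrace{t_{l+1},\dots,t_{l+1}}_{i},t_l,\dots,t_l)-U(\underbrace{t_{l+1},\dots,t_{l+1}}_{i-1},t_l,\dots,t_l)\Big),\quad i=1,\dots,m.$$ **ISU decomposition.** For partitions $\mathcal T_n(t)$ with maximal step length tending to $0$, the ISU decomposition is $D(t)$ with $D_i(t)=\operatorname{plim}_{n\to\infty}D^n_i(t)$ (limit in probability), where $D^n(t)$ are the SU decompositions with respect to $\mathcal T_n(t)$. *)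

theory Defs
  imports "HOL-Probability.Probability"
begin

text \<open>Processes are indexed by coordinate j (0-based, j < m), time s, and outcome.
  The stopped tuple (X_1^{t_1},...,X_m^{t_m}); coordinates j >= m are set to 0.\<close>
definition stopped_tuple ::
  "nat \<Rightarrow> (nat \<Rightarrow> real \<Rightarrow> 'a \<Rightarrow> real) \<Rightarrow> (nat \<Rightarrow> real) \<Rightarrow> nat \<Rightarrow> real \<Rightarrow> 'a \<Rightarrow> real" where
  "stopped_tuple m X ts = (\<lambda>j s \<omega>. if j < m then X j (min s (ts j)) \<omega> else 0)"

definition surface ::
  "((nat \<Rightarrow> real \<Rightarrow> 'a \<Rightarrow> real) \<Rightarrow> 'a \<Rightarrow> real) \<Rightarrow> nat \<Rightarrow> (nat \<Rightarrow> real \<Rightarrow> 'a \<Rightarrow> real)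
     \<Rightarrow> (nat \<Rightarrow> real) \<Rightarrow> 'a \<Rightarrow> real" where
  "surface \<rho> m X ts = \<rho> (stopped_tuple m X ts)"

definition is_partition :: "real \<Rightarrow> nat \<Rightarrow> (nat \<Rightarrow> real) \<Rightarrow> bool" where
  "is_partition t k p \<longleftrightarrow> p 0 = 0 \<and> p k = t \<and> (\<forall>l<k. p l < p (Suc l))"

definition mesh :: "nat \<Rightarrow> (nat \<Rightarrow> real) \<Rightarrow> real" where
  "mesh k p = (if k = 0 then 0 else Max ((\<lambda>l. p (Suc l) - p l) ` {..<k}))"

text \<open>The i-th component (0-based: i = 0..m-1 corresponds to the paper's i+1) of the
  SU decomposition w.r.t. the partition p of length k.\<close>
definition su_dec ::
  "((nat \<Rightarrow> real \<Rightarrow> 'a \<Rightarrow> real) \<Rightarrow> 'a \<Rightarrow> real) \<Rightarrow> nat \<Rightarrow> (nat \<Rightarrow> real \<Rightarrow> 'a \<Rightarrow> real)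
     \<Rightarrow> nat \<Rightarrow> (nat \<Rightarrow> real) \<Rightarrow> nat \<Rightarrow> 'a \<Rightarrow> real" where
  "su_dec \<rho> m X k p i = (\<lambda>\<omega>. \<Sum>l<k.
      surface \<rho> m X (\<lambda>j. if j \<le> i then p (Suc l) else p l) \<omega>
    - surface \<rho> m X (\<lambda>j. if j < i then p (Suc l) else p l) \<omega>)"

definition conv_in_prob :: "'a measure \<Rightarrow> (nat \<Rightarrow> 'a \<Rightarrow> real) \<Rightarrow> ('a \<Rightarrow> real) \<Rightarrow> bool" where
  "conv_in_prob M Yn Z \<longleftrightarrow> (\<forall>n. Yn n \<in> borel_measurable M) \<and> Z \<in> borel_measurable M \<and>
     (\<forall>e>0. (\<lambda>n. measure M {\<omega> \<in> space M. e < \<bar>Yn n \<omega> - Z \<omega>\<bar>}) \<longlonglongrightarrow> 0)"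

definition is_ISU ::
  "'a measure \<Rightarrow> ((nat \<Rightarrow> real \<Rightarrow> 'a \<Rightarrow> real) \<Rightarrow> 'a \<Rightarrow> real) \<Rightarrow> nat \<Rightarrow> (nat \<Rightarrow> real \<Rightarrow> 'a \<Rightarrow> real)
     \<Rightarrow> (nat \<Rightarrow> nat) \<Rightarrow> (nat \<Rightarrow> nat \<Rightarrow> real) \<Rightarrow> (nat \<Rightarrow> 'a \<Rightarrow> real) \<Rightarrow> bool" where
  "is_ISU M \<rho> m X k p D \<longleftrightarrow> (\<forall>i<m. conv_in_prob M (\<lambda>n. su_dec \<rho> m X (k n) (p n) i) (D i))"

end

theory Submission
  imports Defs
begin

lemma convex_abs_real: "convex_on UNIV (abs::real\<Rightarrow>real)"
proof (rule convex_onI)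
  fix t x y :: real assume "t > 0" "t < 1"
  have "\<bar>(1 - t) * x + t * y\<bar> \<le> \<bar>(1 - t) * x\<bar> + \<bar>t * y\<bar>" by (rule abs_triangle_ineq)
  also have "\<dots> = (1 - t) * \<bar>x\<bar> + t * \<bar>y\<bar>" using \<open>t>0\<close> \<open>t<1\<close> by (simp add: abs_mult)
  finally show "\<bar>(1 - t) *\<^sub>R x + t *\<^sub>R y\<bar> \<le> (1 - t) * \<bar>x\<bar> + t * \<bar>y\<bar>" by simp
qed simp

lemma cond_exp_abs_int:
  assumes "prob_space M" "subalgebra M G" "integrable M f"
  shows "(\<integral>x. \<bar>real_cond_exp M G f x\<bar> \<partial>M) \<le> (\<integral>x. \<bar>f x\<bar> \<partial>M)"
proof -
  interpret prob_space M by fact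
  interpret finite_measure_subalgebra M G by unfold_locales (fact assms(2))
  have "AE x in M. \<bar>real_cond_exp M G f x\<bar> \<le> real_cond_exp M G (\<lambda>x. \<bar>f x\<bar>) x"
    apply (rule real_cond_exp_jensens_inequality(2)[where I=UNIV and a=0 and b=0 and q=abs])
    apply (rule assms(3))
    apply simp
    apply simp
    apply (rule integrable_abs[OF assms(3)])
    apply (rule convex_abs_real)
    apply measurable
    done
  moreover have i1: "integrable M (real_cond_exp M G f)" by (rule real_cond_exp_int(1)[OF assms(3)])
  moreover have i2: "integrable M (\<lambda>x. \<bar>f x\<bar>)" using assms(3) by (rule integrable_abs)
  moreover have i3: "integrable M (real_cond_exp M G (\<lambda>x. \<bar>f x\<bar>))" by (rule real_cond_exp_int(1)[OF i2])
  ultimately have "(\<integral>x. \<bar>real_cond_exp M G f x\<bar> \<partial>M) \<le> (\<integral>x. real_cond_exp M G (\<lambda>x. \<bar>f x\<bar>) x \<partial>M)"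
    by (intro integral_mono_AE integrable_abs)
  also have "\<dots> = (\<integral>x. \<bar>f x\<bar> \<partial>M)" by (rule real_cond_exp_int(2)[OF i2])
  finally show ?thesis .
qed

lemma conv_AE_cong:
  assumes "conv_in_prob M S Z" "\<And>n. S' n \<in> borel_measurable M" "Z' \<in> borel_measurable M"
    "\<And>n. AE x in M. S n x = S' n x" "AE x in M. Z x = Z' x"
  shows "conv_in_prob M S' Z'"
proof -
  have Sm[measurable]: "S n \<in> borel_measurable M" for n using assms(1) unfolding conv_in_prob_def by auto
  have Zm[measurable]: "Z \<in> borel_measurable M" using assms(1) unfolding conv_in_prob_def by auto
  have [measurable]: "S' n \<in> borel_measurable M" for n by (fact assms(2))
  have [measurable]: "Z' \<in> borel_measurable M" by (fact assms(3))
  show ?thesis unfolding conv_in_prob_def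
  proof (intro conjI allI impI)
    fix e :: real assume "0 < e"
    have "measure M {\<omega> \<in> space M. e < \<bar>S' n \<omega> - Z' \<omega>\<bar>} = measure M {\<omega> \<in> space M. e < \<bar>S n \<omega> - Z \<omega>\<bar>}" for n
    proof (rule measure_eq_AE)
      show "AE x in M. (x \<in> {\<omega> \<in> space M. e < \<bar>S' n \<omega> - Z' \<omega>\<bar>}) = (x \<in> {\<omega> \<in> space M. e < \<bar>S n \<omega> - Z \<omega>\<bar>})"
        using assms(4)[of n] assms(5) by eventually_elim auto
    qed (simp_all add: Sm Zm)
    then show "(\<lambda>n. measure M {\<omega> \<in> space M. e < \<bar>S' n \<omega> - Z' \<omega>\<bar>}) \<longlonglongrightarrow> 0"
      using assms(1) \<open>0<e\<close> unfolding conv_in_prob_def by simp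
  qed (simp_all add: assms(2,3))
qed

lemma part_bounds:
  assumes "is_partition t k p" "l \<le> k"
  shows "0 \<le> p l \<and> p l \<le> t"
proof -
  have mono: "b \<le> k \<longrightarrow> (\<forall>a\<le>b. p a \<le> p b)" for b
  proof (induction b)
    case 0 then show ?case by simp
  next
    case (Suc b)
    show ?case
    proof (intro impI allI)
      fix a assume "Suc b \<le> k" "a \<le> Suc b"
      then have "p b < p (Suc b)" using assms(1) unfolding is_partition_def by auto
      show "p a \<le> p (Suc b)"
      proof (cases "a = Suc b")
        case False
        then have "a \<le> b" using \<open>a \<le> Suc b\<close> by simp
        then have "p a \<le> p b" using Suc \<open>Suc b \<le> k\<close> by simp
        then show ?thesis using \<open>p b < p (Suc b)\<close> by simp
      qed simp
    qed
  qed
  then show ?thesis using assms unfolding is_partition_def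
    by (metis le0 order_refl)
qed


lemma cond_exp_conv:
  assumes P: "prob_space M" and sub: "subalgebra M G"
    and conv: "conv_in_prob M S Z" and Yint: "integrable M Y"
    and bnd: "\<forall>n. \<forall>\<omega>\<in>space M. \<bar>S n \<omega>\<bar> \<le> Y \<omega>"
  shows "conv_in_prob M (\<lambda>n. real_cond_exp M G (S n)) (real_cond_exp M G Z)"
proof -
  interpret prob_space M by fact
  interpret finite_measure_subalgebra M G by unfold_locales (fact sub)
  have Sm[measurable]: "S n \<in> borel_measurable M" for n using conv unfolding conv_in_prob_def by auto
  have Zm[measurable]: "Z \<in> borel_measurable M" using conv unfolding conv_in_prob_def by auto
  have Ym[measurable]: "Y \<in> borel_measurable M" using Yint by auto
  have cp: "(\<lambda>n. measure M {\<omega>\<in>space M. e < \<bar>S n \<omega> - Z \<omega>\<bar>}) \<longlonglongrightarrow> 0" if "e > 0" for e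
    using conv that unfolding conv_in_prob_def by auto
  have Sint: "integrable M (S n)" for n
  proof (rule Bochner_Integration.integrable_bound[OF Yint Sm])
    show "AE x in M. norm (S n x) \<le> norm (Y x)" using bnd by (intro AE_I2) (metis abs_ge_self order_trans real_norm_def)
  qed
  have Zle: "AE \<omega> in M. \<bar>Z \<omega>\<bar> \<le> Y \<omega>"
  proof -
    have null: "{\<omega>\<in>space M. Y \<omega> + inverse (real (Suc j)) < \<bar>Z \<omega>\<bar>} \<in> null_sets M" for j
    proof -
      define e where "e = inverse (real (Suc j))"
      have e0: "e > 0" unfolding e_def by simp
      let ?A = "{\<omega>\<in>space M. Y \<omega> + e < \<bar>Z \<omega>\<bar>}"
      have sub: "?A \<subseteq> {\<omega>\<in>space M. e < \<bar>S n \<omega> - Z \<omega>\<bar>}" for n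
      proof
        fix \<omega> assume "\<omega> \<in> ?A"
        then have "\<omega> \<in> space M" "Y \<omega> + e < \<bar>Z \<omega>\<bar>" by auto
        moreover have "\<bar>S n \<omega>\<bar> \<le> Y \<omega>" using bnd \<open>\<omega> \<in> space M\<close> by auto
        ultimately show "\<omega> \<in> {\<omega>\<in>space M. e < \<bar>S n \<omega> - Z \<omega>\<bar>}" by auto
      qed
      have Ameas: "?A \<in> sets M" by measurable
      have "measure M ?A \<le> measure M {\<omega>\<in>space M. e < \<bar>S n \<omega> - Z \<omega>\<bar>}" for n
        by (rule finite_measure_mono[OF sub]) measurable
      then have "measure M ?A \<le> 0"
        by (intro LIMSEQ_le_const[OF cp[OF e0]]) auto
      then have "measure M ?A = 0" by (simp add: measure_nonneg antisym)
      then have "emeasure M ?A = 0" by (simp add: emeasure_eq_measure)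
      then show ?thesis using Ameas unfolding e_def by auto
    qed
    have "(\<Union>j. {\<omega>\<in>space M. Y \<omega> + inverse (real (Suc j)) < \<bar>Z \<omega>\<bar>}) \<in> null_sets M"
      using null by (rule null_sets_UN)
    then show ?thesis
    proof (rule AE_I')
      show "{\<omega> \<in> space M. \<not> \<bar>Z \<omega>\<bar> \<le> Y \<omega>} \<subseteq> (\<Union>j. {\<omega>\<in>space M. Y \<omega> + inverse (real (Suc j)) < \<bar>Z \<omega>\<bar>})"
      proof
        fix \<omega> assume "\<omega> \<in> {\<omega> \<in> space M. \<not> \<bar>Z \<omega>\<bar> \<le> Y \<omega>}"
        then have w: "\<omega> \<in> space M" "0 < \<bar>Z \<omega>\<bar> - Y \<omega>" by auto
        then obtain n :: nat where "n > 0" "inverse (real n) < \<bar>Z \<omega>\<bar> - Y \<omega>"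
          using ex_inverse_of_nat_less by blast
        then obtain j where "inverse (real (Suc j)) < \<bar>Z \<omega>\<bar> - Y \<omega>"
          by (metis gr0_implies_Suc)
        then have "Y \<omega> + inverse (real (Suc j)) < \<bar>Z \<omega>\<bar>" by linarith
        then show "\<omega> \<in> (\<Union>j. {\<omega>\<in>space M. Y \<omega> + inverse (real (Suc j)) < \<bar>Z \<omega>\<bar>})"
          using w(1) by blast
      qed
    qed
  qed
  have Zint: "integrable M Z"
  proof (rule Bochner_Integration.integrable_bound[OF Yint Zm])
    show "AE x in M. norm (Z x) \<le> norm (Y x)" using Zle by eventually_elim auto
  qed
  have tail: "(\<lambda>K::nat. \<integral>\<omega>. (if real K < Y \<omega> then Y \<omega> else 0) \<partial>M) \<longlonglongrightarrow> 0"
  proof -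
    have "(\<lambda>K::nat. \<integral>\<omega>. (if real K < Y \<omega> then Y \<omega> else 0) \<partial>M) \<longlonglongrightarrow> (\<integral>\<omega>. 0 \<partial>M)"
    proof (rule integral_dominated_convergence[where w = "\<lambda>\<omega>. \<bar>Y \<omega>\<bar>"])
      show "(\<lambda>_. 0::real) \<in> borel_measurable M" by simp
      show "(\<lambda>\<omega>. if real K < Y \<omega> then Y \<omega> else 0) \<in> borel_measurable M" for K by measurable
      show "integrable M (\<lambda>\<omega>. \<bar>Y \<omega>\<bar>)" using Yint by (rule integrable_abs)
      show "AE \<omega> in M. (\<lambda>K::nat. if real K < Y \<omega> then Y \<omega> else 0) \<longlonglongrightarrow> 0"
      proof (rule AE_I2)
        fix \<omega>
        obtain N :: nat where "Y \<omega> \<le> real N" using real_arch_simple by blast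
        then have "\<forall>K\<ge>N. (if real K < Y \<omega> then Y \<omega> else 0) = 0" by auto
        then have "eventually (\<lambda>K. (if real K < Y \<omega> then Y \<omega> else 0) = 0) sequentially"
          unfolding eventually_sequentially by blast
        then show "(\<lambda>K::nat. if real K < Y \<omega> then Y \<omega> else 0) \<longlonglongrightarrow> 0"
          by (rule tendsto_eventually)
      qed
      show "AE \<omega> in M. norm (if real K < Y \<omega> then Y \<omega> else 0) \<le> \<bar>Y \<omega>\<bar>" for K::nat by auto
    qed
    then show ?thesis by simp
  qed
  have L1: "(\<lambda>n. \<integral>\<omega>. \<bar>S n \<omega> - Z \<omega>\<bar> \<partial>M) \<longlonglongrightarrow> 0"
  proof (rule LIMSEQ_I)
    fix r :: real assume r: "0 < r"
    obtain K0 where K0: "\<forall>K\<ge>K0. norm ((\<integral>\<omega>. (if real K < Y \<omega> then Y \<omega> else 0) \<partial>M) - 0) < r / 8"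
      using LIMSEQ_D[OF tail, of "r/8"] r by auto
    define K where "K = real K0"
    define T where "T = (\<integral>\<omega>. (if K < Y \<omega> then Y \<omega> else 0) \<partial>M)"
    have T: "T < r / 8" using K0 unfolding T_def K_def by force
    define e where "e = r / 4"
    have e0: "e > 0" using r unfolding e_def by simp
    have K0': "K \<ge> 0" unfolding K_def by simp
    obtain N where N: "\<forall>n\<ge>N. norm (measure M {\<omega>\<in>space M. e < \<bar>S n \<omega> - Z \<omega>\<bar>} - 0) < r / (8 * (K + 1))"
      using LIMSEQ_D[OF cp[OF e0], of "r / (8 * (K + 1))"] r K0' by auto
    show "\<exists>no. \<forall>n\<ge>no. norm ((\<integral>\<omega>. \<bar>S n \<omega> - Z \<omega>\<bar> \<partial>M) - 0) < r"
    proof (intro exI allI impI)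
      fix n assume "N \<le> n"
      define A where "A = {\<omega>\<in>space M. e < \<bar>S n \<omega> - Z \<omega>\<bar>}"
      have Ameas[measurable]: "A \<in> sets M" unfolding A_def by measurable
      have PA: "measure M A < r / (8 * (K + 1))" using N \<open>N \<le> n\<close> unfolding A_def by auto
      have pw: "AE \<omega> in M. \<bar>S n \<omega> - Z \<omega>\<bar> \<le> e + 2 * K * indicator A \<omega> + 2 * (if K < Y \<omega> then Y \<omega> else 0)"
        using Zle AE_space
      proof (eventually_elim)
        case (elim \<omega>)
        have S: "\<bar>S n \<omega>\<bar> \<le> Y \<omega>" using bnd elim(2) by auto
        have d: "\<bar>S n \<omega> - Z \<omega>\<bar> \<le> 2 * Y \<omega>" using S elim(1) abs_triangle_ineq4[of "S n \<omega>" "Z \<omega>"] by linarith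
        have tnn: "0 \<le> (if K < Y \<omega> then Y \<omega> else 0)" using K0' by auto
        show ?case
        proof (cases "e < \<bar>S n \<omega> - Z \<omega>\<bar>")
          case True
          then have "\<omega> \<in> A" unfolding A_def using elim(2) by auto
          then have ind: "indicator A \<omega> = (1::real)" by simp
          show ?thesis
          proof (cases "K < Y \<omega>")
            case True
            then show ?thesis using ind d e0 K0' by simp
          next
            case False
            then show ?thesis using ind d e0 K0' by simp
          qed
        next
          case False
          have "0 \<le> 2 * K * indicator A \<omega>" using K0' by simp
          then show ?thesis using False tnn by linarith
        qed
      qed
      have Tint: "integrable M (\<lambda>\<omega>. if K < Y \<omega> then Y \<omega> else 0)"
      proof (rule Bochner_Integration.integrable_bound[OF Yint])
        show "(\<lambda>\<omega>. if K < Y \<omega> then Y \<omega> else 0) \<in> borel_measurable M" by measurable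
        show "AE x in M. norm (if K < Y x then Y x else 0) \<le> norm (Y x)" by auto
      qed
      have Iint: "integrable M (\<lambda>\<omega>. 2 * K * indicator A \<omega>)"
        by (intro Bochner_Integration.integrable_mult_right integrable_real_indicator Ameas) (simp add: emeasure_eq_measure)
      have int_rhs: "integrable M (\<lambda>\<omega>. e + 2 * K * indicator A \<omega> + 2 * (if K < Y \<omega> then Y \<omega> else 0))"
        by (intro Bochner_Integration.integrable_add Bochner_Integration.integrable_mult_right Iint Tint integrable_const)
      have "(\<integral>\<omega>. \<bar>S n \<omega> - Z \<omega>\<bar> \<partial>M) \<le> (\<integral>\<omega>. e + 2 * K * indicator A \<omega> + 2 * (if K < Y \<omega> then Y \<omega> else 0) \<partial>M)"
        by (rule integral_mono_AE[OF _ int_rhs pw]) (intro integrable_abs Bochner_Integration.integrable_diff Sint Zint)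
      also have "\<dots> = (\<integral>\<omega>. e + 2 * K * indicator A \<omega> \<partial>M) + (\<integral>\<omega>. 2 * (if K < Y \<omega> then Y \<omega> else 0) \<partial>M)"
        by (intro Bochner_Integration.integral_add Bochner_Integration.integrable_add Bochner_Integration.integrable_mult_right Iint Tint integrable_const)
      also have "(\<integral>\<omega>. e + 2 * K * indicator A \<omega> \<partial>M) = (\<integral>\<omega>. e \<partial>M) + (\<integral>\<omega>. 2 * K * indicator A \<omega> \<partial>M)"
        by (intro Bochner_Integration.integral_add Iint integrable_const)
      also have "(\<integral>\<omega>. e \<partial>M) = e" by (simp add: prob_space)
      also have "(\<integral>\<omega>. 2 * K * indicator A \<omega> \<partial>M) = 2 * K * measure M A"
        using sets.sets_into_space[OF Ameas] by (simp add: Int_absorb2)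
      also have "(\<integral>\<omega>. 2 * (if K < Y \<omega> then Y \<omega> else 0) \<partial>M) = 2 * T"
        unfolding T_def by simp
      also have "e + 2 * K * measure M A + 2 * T < r"
      proof -
        have "K * measure M A \<le> (K + 1) * (r / (8 * (K + 1)))"
          using PA K0' by (intro mult_mono) (auto simp: measure_nonneg)
        also have "\<dots> = r / 8" using K0' by (simp add: field_simps)
        finally have h: "K * measure M A \<le> r / 8" .
        have "2 * K * measure M A = 2 * (K * measure M A)" by simp
        then show ?thesis using h T r unfolding e_def by linarith
      qed
      finally show "norm ((\<integral>\<omega>. \<bar>S n \<omega> - Z \<omega>\<bar> \<partial>M) - 0) < r" by simp
    qed
  qed
  show ?thesis unfolding conv_in_prob_def
  proof (intro conjI allI impI)
    fix e :: real assume e0: "0 < e"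
    show "(\<lambda>n. measure M {\<omega> \<in> space M. e < \<bar>real_cond_exp M G (S n) \<omega> - real_cond_exp M G Z \<omega>\<bar>}) \<longlonglongrightarrow> 0"
    proof (rule tendsto_sandwich[where f = "\<lambda>_. 0" and h = "\<lambda>n. (\<integral>\<omega>. \<bar>S n \<omega> - Z \<omega>\<bar> \<partial>M) / e"])
      show "\<forall>\<^sub>F n in sequentially. 0 \<le> measure M {\<omega> \<in> space M. e < \<bar>real_cond_exp M G (S n) \<omega> - real_cond_exp M G Z \<omega>\<bar>}"
        by (simp add: measure_nonneg)
      show "(\<lambda>_. 0::real) \<longlonglongrightarrow> 0" by simp
      show "(\<lambda>n. (\<integral>\<omega>. \<bar>S n \<omega> - Z \<omega>\<bar> \<partial>M) / e) \<longlonglongrightarrow> 0"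
        by (rule tendsto_divide_zero[OF L1])
      show "\<forall>\<^sub>F n in sequentially. measure M {\<omega> \<in> space M. e < \<bar>real_cond_exp M G (S n) \<omega> - real_cond_exp M G Z \<omega>\<bar>} \<le> (\<integral>\<omega>. \<bar>S n \<omega> - Z \<omega>\<bar> \<partial>M) / e"
      proof (intro always_eventually allI)
        fix n
        have dint: "integrable M (\<lambda>\<omega>. S n \<omega> - Z \<omega>)"
          by (intro Bochner_Integration.integrable_diff Sint Zint)
        have ae: "AE \<omega> in M. real_cond_exp M G (\<lambda>\<omega>. S n \<omega> - Z \<omega>) \<omega> = real_cond_exp M G (S n) \<omega> - real_cond_exp M G Z \<omega>"
          by (rule real_cond_exp_diff[OF Sint Zint])
        have "measure M {\<omega> \<in> space M. e < \<bar>real_cond_exp M G (S n) \<omega> - real_cond_exp M G Z \<omega>\<bar>}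
            \<le> measure M {\<omega> \<in> space M. e \<le> \<bar>real_cond_exp M G (S n) \<omega> - real_cond_exp M G Z \<omega>\<bar>}"
          by (rule finite_measure_mono) (auto, measurable)
        also have "\<dots> = measure M {\<omega> \<in> space M. \<bar>real_cond_exp M G (\<lambda>\<omega>. S n \<omega> - Z \<omega>) \<omega>\<bar> \<ge> e}"
        proof (rule measure_eq_AE)
          show "AE x in M. (x \<in> {\<omega> \<in> space M. e \<le> \<bar>real_cond_exp M G (S n) \<omega> - real_cond_exp M G Z \<omega>\<bar>}) =
                (x \<in> {\<omega> \<in> space M. \<bar>real_cond_exp M G (\<lambda>\<omega>. S n \<omega> - Z \<omega>) \<omega>\<bar> \<ge> e})"
            using ae by eventually_elim auto
        qed (simp_all)
        also have "\<dots> \<le> (\<integral>\<omega>. \<bar>real_cond_exp M G (\<lambda>\<omega>. S n \<omega> - Z \<omega>) \<omega>\<bar> \<partial>M) / e"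
          by (rule integral_Markov_inequality_measure[where A = "space M"])
             (simp_all add: e0 integrable_abs real_cond_exp_int(1)[OF dint])
        also have "\<dots> \<le> (\<integral>\<omega>. \<bar>S n \<omega> - Z \<omega>\<bar> \<partial>M) / e"
          by (intro divide_right_mono cond_exp_abs_int[OF P sub dint]) (use e0 in simp)
        finally show "measure M {\<omega> \<in> space M. e < \<bar>real_cond_exp M G (S n) \<omega> - real_cond_exp M G Z \<omega>\<bar>} \<le> (\<integral>\<omega>. \<bar>S n \<omega> - Z \<omega>\<bar> \<partial>M) / e" .
      qed
    qed
  qed simp_all
qed


theorem lemma5p3:
  fixes M G :: "'a measure"
    and \<rho> :: "(nat \<Rightarrow> real \<Rightarrow> 'a \<Rightarrow> real) \<Rightarrow> 'a \<Rightarrow> real"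
    and X :: "nat \<Rightarrow> real \<Rightarrow> 'a \<Rightarrow> real"
    and m :: nat and t :: real
    and k :: "nat \<Rightarrow> nat" and p :: "nat \<Rightarrow> nat \<Rightarrow> real"
    and D :: "nat \<Rightarrow> 'a \<Rightarrow> real" and Y :: "'a \<Rightarrow> real"
  assumes "prob_space M"
    and "subalgebra M G"
    and "\<forall>n. is_partition t (k n) (p n)"
    and "(\<lambda>n. mesh (k n) (p n)) \<longlonglongrightarrow> 0"
    and "\<forall>ts. (\<forall>j. 0 \<le> ts j \<and> ts j \<le> t) \<longrightarrow> integrable M (\<rho> (stopped_tuple m X ts))"
    and "is_ISU M \<rho> m X k p D"
    and "integrable M Y"
    and "\<forall>i<m. \<forall>n. \<forall>\<omega>\<in>space M. \<bar>su_dec \<rho> m X (k n) (p n) i \<omega>\<bar> \<le> Y \<omega>"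
  shows "is_ISU M (\<lambda>Z. real_cond_exp M G (\<rho> Z)) m X k p (\<lambda>i. real_cond_exp M G (D i))"
  unfolding is_ISU_def
proof (intro allI impI)
  fix i assume "i < m"
  interpret prob_space M by fact
  interpret finite_measure_subalgebra M G by unfold_locales (fact assms(2))
  have conv: "conv_in_prob M (\<lambda>n. su_dec \<rho> m X (k n) (p n) i) (D i)"
    using assms(6) \<open>i < m\<close> unfolding is_ISU_def by auto
  have C: "conv_in_prob M (\<lambda>n. real_cond_exp M G (su_dec \<rho> m X (k n) (p n) i)) (real_cond_exp M G (D i))"
    by (rule cond_exp_conv[OF assms(1) assms(2) conv assms(7)]) (use assms(8) \<open>i < m\<close> in auto)
  show "conv_in_prob M (\<lambda>n. su_dec (\<lambda>Z. real_cond_exp M G (\<rho> Z)) m X (k n) (p n) i) (real_cond_exp M G (D i))"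
  proof (rule conv_AE_cong[OF C])
    show "su_dec (\<lambda>Z. real_cond_exp M G (\<rho> Z)) m X (k n) (p n) i \<in> borel_measurable M" for n
      unfolding su_dec_def surface_def
      by (intro borel_measurable_sum borel_measurable_diff borel_measurable_cond_exp2)
    show "real_cond_exp M G (D i) \<in> borel_measurable M" by simp
    show "AE x in M. real_cond_exp M G (D i) x = real_cond_exp M G (D i) x" by simp
    fix n
    define K where "K = k n"
    define q where "q = p n"
    define a where "a l = (\<lambda>j. if j \<le> i then q (Suc l) else q l)" for l
    define b where "b l = (\<lambda>j. if j < i then q (Suc l) else q l)" for l
    have qb: "0 \<le> q l \<and> q l \<le> t" if "l \<le> K" for l
      using part_bounds[of t K q l] assms(3) that unfolding K_def q_def by auto
    have ia: "integrable M (\<rho> (stopped_tuple m X (a l)))" if "l < K" for l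
      using assms(5) qb[of l] qb[of "Suc l"] that unfolding a_def by auto
    have ib: "integrable M (\<rho> (stopped_tuple m X (b l)))" if "l < K" for l
      using assms(5) qb[of l] qb[of "Suc l"] that unfolding b_def by auto
    define f where "f l = (if l < K then (\<lambda>\<omega>. \<rho> (stopped_tuple m X (a l)) \<omega> - \<rho> (stopped_tuple m X (b l)) \<omega>) else (\<lambda>_. 0))" for l
    have fint: "integrable M (f l)" for l
      unfolding f_def using ia ib by (auto intro: Bochner_Integration.integrable_diff)
    have su_eq: "su_dec \<rho> m X (k n) (p n) i = (\<lambda>\<omega>. \<Sum>l<K. f l \<omega>)"
      unfolding su_dec_def surface_def f_def K_def a_def b_def q_def
      by (intro ext sum.cong) auto
    have su'_eq: "su_dec (\<lambda>Z. real_cond_exp M G (\<rho> Z)) m X (k n) (p n) i = (\<lambda>\<omega>. \<Sum>l<K.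
        real_cond_exp M G (\<rho> (stopped_tuple m X (a l))) \<omega> - real_cond_exp M G (\<rho> (stopped_tuple m X (b l))) \<omega>)"
      unfolding su_dec_def surface_def K_def a_def b_def q_def by simp
    have ae1: "AE \<omega> in M. real_cond_exp M G (\<lambda>\<omega>. \<Sum>l<K. f l \<omega>) \<omega> = (\<Sum>l<K. real_cond_exp M G (f l) \<omega>)"
      by (rule real_cond_exp_sum[OF fint])
    have ae2: "AE \<omega> in M. \<forall>l\<in>{..<K}. real_cond_exp M G (f l) \<omega> =
        real_cond_exp M G (\<rho> (stopped_tuple m X (a l))) \<omega> - real_cond_exp M G (\<rho> (stopped_tuple m X (b l))) \<omega>"
    proof (rule eventually_ball_finite)
      show "finite {..<K}" by simp
      show "\<forall>l\<in>{..<K}. AE \<omega> in M. real_cond_exp M G (f l) \<omega> =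
        real_cond_exp M G (\<rho> (stopped_tuple m X (a l))) \<omega> - real_cond_exp M G (\<rho> (stopped_tuple m X (b l))) \<omega>"
      proof
        fix l assume "l \<in> {..<K}"
        then have "l < K" by simp
        then have "f l = (\<lambda>\<omega>. \<rho> (stopped_tuple m X (a l)) \<omega> - \<rho> (stopped_tuple m X (b l)) \<omega>)"
          unfolding f_def by simp
        then show "AE \<omega> in M. real_cond_exp M G (f l) \<omega> =
          real_cond_exp M G (\<rho> (stopped_tuple m X (a l))) \<omega> - real_cond_exp M G (\<rho> (stopped_tuple m X (b l))) \<omega>"
          using real_cond_exp_diff[OF ia[OF \<open>l < K\<close>] ib[OF \<open>l < K\<close>]] by simp
      qed
    qed
    show "AE x in M. real_cond_exp M G (su_dec \<rho> m X (k n) (p n) i) x =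
        su_dec (\<lambda>Z. real_cond_exp M G (\<rho> Z)) m X (k n) (p n) i x"
      unfolding su_eq su'_eq using ae1 ae2 by eventually_elim simp
  qed
qed

end
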